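(* Let $\varphi,\psi\in G$ satisfy $\lim_{t\to 0+}\psi(t)/\varphi(t)=0$, and let $E$ be a symmetric space on $[0,1]$ whose fundamental function is $\varphi$. Then $E\subset M(\tilde\psi)$ and the identity inclusion operator $I:E\to M(\tilde\psi)$ is disjointly strictly singular.
   Context: All functions are Lebesgue measurable on $[0,1]$, $\mu$ is Lebesgue measure, and $x^*$ denotes the decreasing left-continuous rearrangement of $|x|$. A symmetric space (SS) on $[0,1]$ is a Banach space $E$ of measurable functions on $[0,1]$ such that: (1) if $y\in E$ and $|x(t)|\le |y(t)|$ then $x\in E$ and $\|x\|\le\|y\|$; (2) if $y\in E$ and $x,y$ are equimeasurable (i.e. $\mu\{|x|>\tau\}=\mu\{|y|>\tau\}$ for all $\tau>0$) then $x\in E$ and $\|x\|=\|y\|$. The fundamental function of $E$ is $f_E(t)=\|\chi_{(0,t)}\|_E$. $G$ denotes the class of all positive increasing concave functions on $(0,1]$. For $\psi\in G$ put $\tilde\psi(t)=t/\psi(t)$; the Marcinkiewicz space $M(\tilde\psi)$ consists of all measurable $x$ with $\|x\|_{M(\tilde\psi)}=\sup_{0<t\le1}\frac{1}{\tilde\psi(t)}\int_0^t x^*(s)\,ds<\infty$. A bounded linear operator $T$ from a Banach lattice $X$ into a Banach space $Y$ is disjointly strictly singular (DSS) if there is no sequence of nonzero pairwise disjoint elements $x_n\in X$ such that the restriction of $T$ to their closed linear span $[x_n]$ is an isomorphism (onto its image). *)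

theory Defs
  imports "HOL-Analysis.Analysis"
begin

abbreviation mu01 :: "real measure" where
  "mu01 \<equiv> lebesgue_on {0..1}"

definition distr_fun :: "(real \<Rightarrow> real) \<Rightarrow> real \<Rightarrow> ennreal" where
  "distr_fun x \<tau> = emeasure mu01 {t \<in> {0..1}. \<bar>x t\<bar> > \<tau>}"

definition equimeasurable :: "(real \<Rightarrow> real) \<Rightarrow> (real \<Rightarrow> real) \<Rightarrow> bool" where
  "equimeasurable x y \<longleftrightarrow> (\<forall>\<tau>>0. distr_fun x \<tau> = distr_fun y \<tau>)"

definition rearr :: "(real \<Rightarrow> real) \<Rightarrow> real \<Rightarrow> real" where
  "rearr x s = Inf {\<tau>. \<tau> \<ge> 0 \<and> distr_fun x \<tau> < ennreal s}"

text \<open>Symmetric space on [0,1]: a set S of measurable functions with a norm N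
  (elements identified when equal a.e.), forming a Banach space, an ideal,
  and rearrangement invariant.\<close>
definition symmetric_space :: "(real \<Rightarrow> real) set \<Rightarrow> ((real \<Rightarrow> real) \<Rightarrow> real) \<Rightarrow> bool" where
  "symmetric_space S N \<longleftrightarrow>
     S \<subseteq> borel_measurable mu01 \<and>
     (\<lambda>t. 0) \<in> S \<and>
     (\<forall>x\<in>S. \<forall>y\<in>S. (\<lambda>t. x t + y t) \<in> S) \<and>
     (\<forall>x\<in>S. \<forall>c. (\<lambda>t. c * x t) \<in> S) \<and>
     (\<forall>x\<in>S. N x \<ge> 0) \<and>
     (\<forall>x\<in>S. N x = 0 \<longleftrightarrow> (AE t in mu01. x t = 0)) \<and>
     (\<forall>x\<in>S. \<forall>y\<in>S. N (\<lambda>t. x t + y t) \<le> N x + N y) \<and>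
     (\<forall>x\<in>S. \<forall>c. N (\<lambda>t. c * x t) = \<bar>c\<bar> * N x) \<and>
     (\<forall>u :: nat \<Rightarrow> real \<Rightarrow> real. (\<forall>n. u n \<in> S) \<longrightarrow>
        (\<forall>e>0. \<exists>K. \<forall>m\<ge>K. \<forall>n\<ge>K. N (\<lambda>t. u m t - u n t) < e) \<longrightarrow>
        (\<exists>x\<in>S. (\<lambda>n. N (\<lambda>t. u n t - x t)) \<longlonglongrightarrow> 0)) \<and>
     (\<forall>x y. y \<in> S \<longrightarrow> x \<in> borel_measurable mu01 \<longrightarrow>
        (AE t in mu01. \<bar>x t\<bar> \<le> \<bar>y t\<bar>) \<longrightarrow> x \<in> S \<and> N x \<le> N y) \<and>
     (\<forall>x y. y \<in> S \<longrightarrow> x \<in> borel_measurable mu01 \<longrightarrow>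
        equimeasurable x y \<longrightarrow> x \<in> S \<and> N x = N y)"

definition fundamental_function :: "((real \<Rightarrow> real) \<Rightarrow> real) \<Rightarrow> real \<Rightarrow> real" where
  "fundamental_function N t = N (indicator {0<..<t})"

definition classG :: "(real \<Rightarrow> real) \<Rightarrow> bool" where
  "classG \<phi> \<longleftrightarrow> (\<forall>t\<in>{0<..1}. \<phi> t > 0) \<and> mono_on {0<..1} \<phi> \<and> concave_on {0<..1} \<phi>"

definition tilde :: "(real \<Rightarrow> real) \<Rightarrow> real \<Rightarrow> real" where
  "tilde \<psi> t = t / \<psi> t"

text \<open>Marcinkiewicz functional (possibly infinite):
  for the weight w (w = tilde psi gives M(tilde psi)):
  sup over 0<t<=1 of (1/w t) * integral_0^t x*(s) ds.\<close>
definition marc_enorm :: "(real \<Rightarrow> real) \<Rightarrow> (real \<Rightarrow> real) \<Rightarrow> ennreal" where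
  "marc_enorm w x = (SUP t\<in>{0<..1}. ennreal (1 / w t) *
        (\<integral>\<^sup>+ s\<in>{0<..<t}. ennreal (rearr x s) \<partial>lborel))"

definition marc_space :: "(real \<Rightarrow> real) \<Rightarrow> (real \<Rightarrow> real) set" where
  "marc_space \<psi> = {x \<in> borel_measurable mu01. marc_enorm \<psi> x < \<infinity>}"

definition marc_norm :: "(real \<Rightarrow> real) \<Rightarrow> (real \<Rightarrow> real) \<Rightarrow> real" where
  "marc_norm \<psi> x = enn2real (marc_enorm \<psi> x)"

definition pairwise_disjoint_seq :: "(nat \<Rightarrow> real \<Rightarrow> real) \<Rightarrow> bool" where
  "pairwise_disjoint_seq u \<longleftrightarrow> (\<forall>m n. m \<noteq> n \<longrightarrow> (AE t in mu01. u m t * u n t = 0))"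

definition closed_span :: "(real \<Rightarrow> real) set \<Rightarrow> ((real \<Rightarrow> real) \<Rightarrow> real) \<Rightarrow> (nat \<Rightarrow> real \<Rightarrow> real)
    \<Rightarrow> (real \<Rightarrow> real) set" where
  "closed_span S N u = {x \<in> S. \<exists>v :: nat \<Rightarrow> real \<Rightarrow> real.
      (\<forall>k. \<exists>n c. v k = (\<lambda>t. \<Sum>i<n. c i * u i t)) \<and>
      (\<lambda>k. N (\<lambda>t. v k t - x t)) \<longlonglongrightarrow> 0}"

definition inclusion_DSS :: "(real \<Rightarrow> real) set \<Rightarrow> ((real \<Rightarrow> real) \<Rightarrow> real) \<Rightarrow> (real \<Rightarrow> real) \<Rightarrow> bool" where
  "inclusion_DSS S N \<psi> \<longleftrightarrow>
     \<not> (\<exists>u c. (\<forall>n. u n \<in> S \<and> \<not> (AE t in mu01. u n t = 0)) \<and> pairwise_disjoint_seq u \<and>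
          c > 0 \<and> (\<forall>x\<in>closed_span S N u. c * N x \<le> marc_norm \<psi> x))"

end

theory Submission
  imports Defs
begin

lemma level_sum:
  fixes U :: "nat \<Rightarrow> real set" and \<epsilon> \<tau> :: real
  assumes e: "\<epsilon> > 0" and tau: "\<tau> \<ge> 0" and anti: "\<And>i. U (Suc i) \<subseteq> U i"
  shows "((\<Sum>i<M. \<epsilon> * indicator (U i) s) > \<tau>) \<longleftrightarrow> (nat \<lfloor>\<tau>/\<epsilon>\<rfloor> < M \<and> s \<in> U (nat \<lfloor>\<tau>/\<epsilon>\<rfloor>))"
proof -
  define m where "m = nat \<lfloor>\<tau>/\<epsilon>\<rfloor>"
  have anti': "U j \<subseteq> U i" if "i \<le> j" for i j
    using lift_Suc_antimono_le[of U, OF anti that] .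
  have m1: "real m \<le> \<tau>/\<epsilon>" unfolding m_def using tau e
    by (simp add: of_nat_nat)
  have m2: "\<tau>/\<epsilon> < real m + 1" unfolding m_def using tau e
    by (simp add: of_nat_nat)
  have A: "(\<Sum>i<M. \<epsilon> * indicator (U i) s) > \<tau>" if "m < M" "s \<in> U m"
  proof -
    have "(\<Sum>i<Suc m. \<epsilon> * indicator (U i) s) \<le> (\<Sum>i<M. \<epsilon> * indicator (U i) s)"
      by (rule sum_mono2) (use that e in auto)
    moreover have "(\<Sum>i<Suc m. \<epsilon> * indicator (U i) s) = (\<Sum>i<Suc m. \<epsilon>)"
    proof (rule sum.cong)
      fix i assume "i \<in> {..<Suc m}"
      then have "s \<in> U i" using anti'[of i m] that by auto
      then show "\<epsilon> * indicator (U i) s = \<epsilon>" by simp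
    qed simp
    moreover have "\<tau> < (real m + 1) * \<epsilon>" using m2 e by (simp add: field_simps)
    ultimately show ?thesis by (simp add: algebra_simps)
  qed
  have B: "(\<Sum>i<M. \<epsilon> * indicator (U i) s) \<le> \<tau>" if "\<not> (m < M \<and> s \<in> U m)"
  proof -
    have z: "s \<notin> U i" if "i < M" "m \<le> i" for i
      using anti'[OF \<open>m \<le> i\<close>] \<open>\<not> (m < M \<and> s \<in> U m)\<close> that by auto
    have "(\<Sum>i<M. \<epsilon> * indicator (U i) s) \<le> (\<Sum>i<M. if i < m then \<epsilon> else 0)"
      by (rule sum_mono) (use z e in \<open>auto simp: indicator_def\<close>)
    also have "\<dots> = (\<Sum>i\<in>{..<M} \<inter> {..<m}. \<epsilon>)"
      by (simp add: sum.If_cases Int_def)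
    also have "\<dots> \<le> (\<Sum>i<m. \<epsilon>)"
      by (rule sum_mono2) (use e in auto)
    also have "\<dots> = real m * \<epsilon>" by simp
    also have "\<dots> \<le> \<tau>" using m1 e by (simp add: field_simps)
    finally show ?thesis .
  qed
  show ?thesis using A B unfolding m_def[symmetric] by force
qed


lemma mu01_sets: "A \<in> sets borel \<Longrightarrow> A \<subseteq> {0..1} \<Longrightarrow> A \<in> sets mu01"
  unfolding sets_restrict_space
  by (metis image_eqI inf.absorb2 sets_completionI_sets sets_lborel)

lemma mu01_emeasure: "A \<in> sets borel \<Longrightarrow> A \<subseteq> {0..1} \<Longrightarrow> emeasure mu01 A = emeasure lborel A"
  by (subst emeasure_restrict_space) auto

lemma mu01_sub: "A \<in> sets mu01 \<Longrightarrow> A \<subseteq> {0..1}"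
  using sets.sets_into_space[of A mu01] by simp

lemma mu01_le1: "emeasure mu01 A \<le> 1"
proof -
  have "emeasure mu01 A \<le> emeasure mu01 (space mu01)" by (rule emeasure_space)
  also have "\<dots> = emeasure lborel {0..1::real}" by (simp add: mu01_emeasure)
  finally show ?thesis by simp
qed

lemma Ioo_mu01: "0 \<le> a \<Longrightarrow> a \<le> 1 \<Longrightarrow> emeasure mu01 {0<..<a} = ennreal a"
  by (subst mu01_emeasure) auto

lemma Ioo_sets: "a \<le> 1 \<Longrightarrow> {0<..<a} \<in> sets mu01"
  by (rule mu01_sets) auto

lemma
  assumes "symmetric_space S N"
  shows ss_meas: "x \<in> S \<Longrightarrow> x \<in> borel_measurable mu01"
    and ss_zero: "(\<lambda>t. 0) \<in> S"
    and ss_add: "x \<in> S \<Longrightarrow> y \<in> S \<Longrightarrow> (\<lambda>t. x t + y t) \<in> S"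
    and ss_smult: "x \<in> S \<Longrightarrow> (\<lambda>t. c * x t) \<in> S"
    and ss_nonneg: "x \<in> S \<Longrightarrow> N x \<ge> 0"
    and ss_null: "x \<in> S \<Longrightarrow> N x = 0 \<longleftrightarrow> (AE t in mu01. x t = 0)"
    and ss_tri: "x \<in> S \<Longrightarrow> y \<in> S \<Longrightarrow> N (\<lambda>t. x t + y t) \<le> N x + N y"
    and ss_hom: "x \<in> S \<Longrightarrow> N (\<lambda>t. c * x t) = \<bar>c\<bar> * N x"
    and ss_ideal: "y \<in> S \<Longrightarrow> x \<in> borel_measurable mu01 \<Longrightarrow>
        (AE t in mu01. \<bar>x t\<bar> \<le> \<bar>y t\<bar>) \<Longrightarrow> x \<in> S \<and> N x \<le> N y"
    and ss_equi: "y \<in> S \<Longrightarrow> x \<in> borel_measurable mu01 \<Longrightarrow>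
        equimeasurable x y \<Longrightarrow> x \<in> S \<and> N x = N y"
proof -
  note A = assms[unfolded symmetric_space_def]
  show "x \<in> S \<Longrightarrow> x \<in> borel_measurable mu01" using A by (elim conjE) blast
  show "(\<lambda>t. 0) \<in> S" using A by (elim conjE) assumption
  show "x \<in> S \<Longrightarrow> y \<in> S \<Longrightarrow> (\<lambda>t. x t + y t) \<in> S" using A by (elim conjE) blast
  show "x \<in> S \<Longrightarrow> (\<lambda>t. c * x t) \<in> S" using A by (elim conjE) blast
  show "x \<in> S \<Longrightarrow> N x \<ge> 0" using A by (elim conjE) blast
  show "x \<in> S \<Longrightarrow> N x = 0 \<longleftrightarrow> (AE t in mu01. x t = 0)" using A by (elim conjE) blast
  show "x \<in> S \<Longrightarrow> y \<in> S \<Longrightarrow> N (\<lambda>t. x t + y t) \<le> N x + N y" using A by (elim conjE) blast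
  show "x \<in> S \<Longrightarrow> N (\<lambda>t. c * x t) = \<bar>c\<bar> * N x" using A by (elim conjE) blast
  show "y \<in> S \<Longrightarrow> x \<in> borel_measurable mu01 \<Longrightarrow>
        (AE t in mu01. \<bar>x t\<bar> \<le> \<bar>y t\<bar>) \<Longrightarrow> x \<in> S \<and> N x \<le> N y" using A by (elim conjE) blast
  show "y \<in> S \<Longrightarrow> x \<in> borel_measurable mu01 \<Longrightarrow>
        equimeasurable x y \<Longrightarrow> x \<in> S \<and> N x = N y" using A by (elim conjE) blast
qed

lemma ss_N0: "symmetric_space S N \<Longrightarrow> N (\<lambda>t. 0) = 0"
  using ss_null[of S N "\<lambda>t. 0"] ss_zero[of S N] by simp

lemma ss_sum:
  fixes n :: nat
  assumes ss: "symmetric_space S N" and F: "\<And>j. F j \<in> S"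
  shows "(\<lambda>s. \<Sum>j<n. F j s) \<in> S \<and> N (\<lambda>s. \<Sum>j<n. F j s) \<le> (\<Sum>j<n. N (F j))"
proof (induction n)
  case 0
  then show ?case using ss_zero[OF ss] ss_N0[OF ss] by simp
next
  case (Suc n)
  have e: "(\<lambda>s. \<Sum>j<Suc n. F j s) = (\<lambda>s. (\<Sum>j<n. F j s) + F n s)" by simp
  show ?case unfolding e
    using Suc ss_add[OF ss, of "\<lambda>s. \<Sum>j<n. F j s" "F n"] ss_tri[OF ss, of "\<lambda>s. \<Sum>j<n. F j s" "F n"] F
    by (simp add: F)
qed

lemma step_meas:
  fixes \<epsilon> :: real and U :: "nat \<Rightarrow> real set"
  assumes "\<And>i. U i \<in> sets mu01"
  shows "(\<lambda>s. \<Sum>i<M. \<epsilon> * indicator (U i) s) \<in> borel_measurable mu01"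
proof -
  have [measurable]: "U i \<in> sets mu01" for i by (rule assms)
  show ?thesis by measurable
qed

lemma step_nonneg: "\<epsilon> \<ge> 0 \<Longrightarrow> (\<Sum>i<M. \<epsilon> * indicator (U i) s) \<ge> (0::real)"
  by (rule sum_nonneg) auto

lemma step_distr:
  assumes e: "\<epsilon> > 0" and tau: "\<tau> > 0" and anti: "\<And>i. U (Suc i) \<subseteq> U i"
    and U: "\<And>i. U i \<in> sets mu01"
  shows "distr_fun (\<lambda>s. \<Sum>i<M. \<epsilon> * indicator (U i) s) \<tau> =
    (if nat \<lfloor>\<tau>/\<epsilon>\<rfloor> < M then emeasure mu01 (U (nat \<lfloor>\<tau>/\<epsilon>\<rfloor>)) else 0)"
proof -
  have "{t \<in> {0..1}. \<bar>\<Sum>i<M. \<epsilon> * indicator (U i) t\<bar> > \<tau>} =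
     (if nat \<lfloor>\<tau>/\<epsilon>\<rfloor> < M then U (nat \<lfloor>\<tau>/\<epsilon>\<rfloor>) else {})"
  proof -
    have sub: "\<And>s i. s \<in> U i \<Longrightarrow> s \<in> {0..1}" using mu01_sub[OF U] by blast
    show ?thesis
    using level_sum[where U=U and \<tau>=\<tau>, OF e _ anti] tau step_nonneg[of \<epsilon>] e sub
    by (auto simp del: atLeastAtMost_iff)
  qed
  then show ?thesis unfolding distr_fun_def by simp
qed

lemma step_equi:
  assumes e: "\<epsilon> > 0" and antiU: "\<And>i. U (Suc i) \<subseteq> U i" and antiV: "\<And>i. V (Suc i) \<subseteq> V i"
    and U: "\<And>i. U i \<in> sets mu01" and V: "\<And>i. V i \<in> sets mu01"
    and eq: "\<And>i. i < M \<Longrightarrow> emeasure mu01 (U i) = emeasure mu01 (V i)"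
  shows "equimeasurable (\<lambda>s. \<Sum>i<M. \<epsilon> * indicator (U i) s) (\<lambda>s. \<Sum>i<M. \<epsilon> * indicator (V i) s)"
  unfolding equimeasurable_def
  using step_distr[where U=U, OF e _ antiU U] step_distr[where U=V, OF e _ antiV V] eq by simp

definition rotset :: "real \<Rightarrow> real \<Rightarrow> real \<Rightarrow> real set" where
  "rotset t c b = {0<..<min (t-c) (b-c)} \<union> {t-c<..<min t (t-c+b)}"

lemma rot_borel: "rotset t c b \<in> sets borel"
  unfolding rotset_def by simp

lemma rot_mono: "b' \<le> b \<Longrightarrow> rotset t c b' \<subseteq> rotset t c b"
  unfolding rotset_def by auto

lemma rot_sub: "0 \<le> c \<Longrightarrow> c \<le> t \<Longrightarrow> t \<le> 1 \<Longrightarrow> rotset t c b \<subseteq> {0..1}"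
  unfolding rotset_def by auto

lemma rot_measure:
  assumes "0 \<le> c" "c < t" "0 \<le> b" "b \<le> t"
  shows "emeasure lborel (rotset t c b) = ennreal b"
proof -
  define A where "A = {0<..<min (t-c) (b-c)}"
  define B where "B = {t-c<..<min t (t-c+b)}"
  have dis: "A \<inter> B = {}" unfolding A_def B_def by auto
  have eA: "emeasure lborel A = ennreal (max 0 (b - c))"
  proof (cases "b \<le> c")
    case True
    then have "A = {}" unfolding A_def by auto
    then show ?thesis using True by simp
  next
    case False
    then have "A = {0<..<b-c}" unfolding A_def using assms by (simp add: min_def)
    then show ?thesis using False by simp
  qed
  have eB: "emeasure lborel B = ennreal (min c b)"
  proof -
    have "B = {t-c<..<t-c + min c b}" unfolding B_def using assms by (auto simp: min_def)
    then show ?thesis using assms by simp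
  qed
  have "emeasure lborel (rotset t c b) = emeasure lborel A + emeasure lborel B"
    unfolding rotset_def A_def[symmetric] B_def[symmetric]
    by (rule plus_emeasure[symmetric]) (auto simp: A_def B_def dis[unfolded A_def B_def])
  also have "\<dots> = ennreal (max 0 (b - c) + min c b)"
    using eA eB assms by (simp add: ennreal_plus)
  also have "max 0 (b - c) + min c b = b" by (simp add: max_def min_def)
  finally show ?thesis .
qed

lemma mod_bij: "0 < n \<Longrightarrow> bij_betw (\<lambda>j. (q + j) mod n) {..<n} {..<(n::nat)}"
proof -
  assume n: "0 < n"
  have inj: "inj_on (\<lambda>j. (q + j) mod n) {..<n}"
  proof (rule inj_onI)
    fix i j assume "i \<in> {..<n}" "j \<in> {..<n}" "(q + i) mod n = (q + j) mod n"
    have aux: "a = b" if "b \<le> a" "a < n" "(q + a) mod n = (q + b) mod n" for a b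
    proof -
      have "n dvd (q + a) - (q + b)" using mod_eq_dvd_iff_nat[of "q+b" "q+a" n] that by simp
      then have "n dvd a - b" by simp
      moreover have "a - b < n" using that by simp
      ultimately have "a - b = 0" using nat_dvd_not_less by (metis gr0I)
      then show ?thesis using that by simp
    qed
    show "i = j"
    proof (cases "j \<le> i")
      case True then show ?thesis using aux[of j i] \<open>i \<in> {..<n}\<close> \<open>(q + i) mod n = (q + j) mod n\<close> by simp
    next
      case False then show ?thesis using aux[of i j] \<open>j \<in> {..<n}\<close> \<open>(q + i) mod n = (q + j) mod n\<close> by simp
    qed
  qed
  have "(\<lambda>j. (q + j) mod n) ` {..<n} = {..<n}"
    by (rule endo_inj_surj) (use n inj in auto)
  then show ?thesis using inj unfolding bij_betw_def by simp
qed

lemma rot_key: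
  fixes t s b y r :: real and q j l n :: nat
  assumes t: "0 < t" and n: "0 < n" and s: "0 < s" "s < t"
    and y: "s = t * (real q + r) / real n" and r: "0 \<le> r" "r < 1"
    and l1: "1 \<le> l" and lb: "real l + 1 \<le> real n * b / t" and ln: "l < n"
    and lq: "l = q + j \<or> l + n = q + j"
  shows "s \<in> rotset t (real j * t / real n) b"
proof -
  have lr: "real l + r < real n * b / t" using lb r by linarith
  then have lr': "t * (real l + r) / real n < b" using t n by (simp add: field_simps)
  have lr2: "t * (real l + r) / real n < t" using ln r t n
  proof -
    have "real l + 1 \<le> real n" using ln by linarith
    then have "real l + r < real n" using r by linarith
    then have "t * (real l + r) < t * real n" using t by simp
    then show ?thesis using n by (simp add: field_simps)
  qed
  have pos: "0 < t * (real l + r) / real n" using t n r l1 by simp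
  from lq show ?thesis
  proof
    assume "l = q + j"
    then have e: "s + real j * t / real n = t * (real l + r) / real n"
      using y n by (simp add: field_simps)
    show ?thesis unfolding rotset_def using e lr' lr2 s by auto
  next
    assume "l + n = q + j"
    then have e: "s + real j * t / real n - t = t * (real l + r) / real n"
    proof -
      have "real l + real n = real q + real j" using \<open>l + n = q + j\<close> by (metis of_nat_add)
      then have "t * (real j + real q) = t * (real l + real n)" by (simp add: add.commute)
      then have h: "t * real j + t * real q = t * real l + t * real n" by (simp only: distrib_left)
      show ?thesis using y n h by (simp add: field_simps)
    qed
    show ?thesis unfolding rotset_def using e lr' lr2 pos s by auto
  qed
qed


lemma rot_count:
  fixes t s b :: real and n :: nat
  assumes t: "0 < t" and n: "0 < n" and s: "0 < s" "s < t" and b: "0 \<le> b" "b \<le> t"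
  shows "real n * b / t - 2 \<le> (\<Sum>j<n. indicator (rotset t (real j * t / real n) b) s)"
proof -
  define y where "y = real n * s / t"
  define q where "q = nat \<lfloor>y\<rfloor>"
  define r where "r = y - real q"
  define \<beta> where "\<beta> = real n * b / t"
  have y0: "0 < y" using s t n by (simp add: y_def)
  have yn: "y < real n" using s t n by (simp add: y_def field_simps)
  have qy: "real q = of_int \<lfloor>y\<rfloor>" using y0 by (simp add: q_def)
  have r: "0 \<le> r" "r < 1" using qy unfolding r_def by linarith+
  have qn: "q < n" using qy yn by linarith
  have ys: "s = t * (real q + r) / real n" using t n unfolding r_def y_def by (simp add: field_simps)
  have \<beta>0: "0 \<le> \<beta>" "\<beta> \<le> real n" using b t n by (simp_all add: \<beta>_def field_simps)
  define P where "P l \<longleftrightarrow> 1 \<le> l \<and> real l + 1 \<le> \<beta>" for l :: nat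
  have "(\<Sum>j<n. of_bool (P ((q+j) mod n)) :: real) \<le> (\<Sum>j<n. indicator (rotset t (real j * t / real n) b) s)"
  proof (rule sum_mono)
    fix j assume j: "j \<in> {..<n}"
    show "(of_bool (P ((q+j) mod n)) :: real) \<le> indicator (rotset t (real j * t / real n) b) s"
    proof (cases "P ((q+j) mod n)")
      case True
      have lq: "(q+j) mod n = q + j \<or> (q+j) mod n + n = q + j"
      proof (cases "q + j < n")
        case True then show ?thesis by simp
      next
        case False
        then have "(q+j) mod n = q + j - n" using j qn by (simp add: mod_if)
        then show ?thesis using False by simp
      qed
      have "s \<in> rotset t (real j * t / real n) b"
        by (rule rot_key[OF t n s ys r _ _ _ lq]) (use True n in \<open>auto simp: P_def \<beta>_def\<close>)
      then show ?thesis by simp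
    qed simp
  qed
  also have "(\<Sum>j<n. of_bool (P ((q+j) mod n)) :: real) = (\<Sum>l<n. of_bool (P l))"
    using sum.reindex_bij_betw[OF mod_bij[OF n, of q], of "\<lambda>l. of_bool (P l) :: real"] by simp
  finally have A: "(\<Sum>l<n. of_bool (P l) :: real) \<le> (\<Sum>j<n. indicator (rotset t (real j * t / real n) b) s)" .
  define K where "K = nat \<lfloor>\<beta>\<rfloor>"
  have Kb: "real K = of_int \<lfloor>\<beta>\<rfloor>" using \<beta>0 by (simp add: K_def)
  have Kn: "K \<le> n" using Kb \<beta>0 by linarith
  have "(\<Sum>l\<in>{1..<K}. 1 :: real) = (\<Sum>l\<in>{1..<K}. of_bool (P l))"
  proof (rule sum.cong)
    fix l assume "l \<in> {1..<K}"
    then have "1 \<le> l" "Suc l \<le> K" by auto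
    then have "real l + 1 \<le> real K" by linarith
    moreover have "real_of_int \<lfloor>\<beta>\<rfloor> \<le> \<beta>" by simp
    ultimately have "P l" using \<open>1 \<le> l\<close> Kb unfolding P_def by linarith
    then show "1 = (of_bool (P l) :: real)" by simp
  qed simp
  also have "\<dots> \<le> (\<Sum>l<n. of_bool (P l))"
    by (rule sum_mono2) (use Kn in auto)
  finally have B: "real (K - 1) \<le> (\<Sum>l<n. of_bool (P l) :: real)" by simp
  have C: "\<beta> - 2 \<le> real (K - 1)" using Kb by linarith
  show ?thesis using A B C unfolding \<beta>_def by linarith
qed

lemma ss_sum2:
  fixes n :: nat
  assumes ss: "symmetric_space S N" and F: "\<And>j. j < n \<Longrightarrow> F j \<in> S"
  shows "(\<lambda>s. \<Sum>j<n. F j s) \<in> S \<and> N (\<lambda>s. \<Sum>j<n. F j s) \<le> (\<Sum>j<n. N (F j))"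
  using F
proof (induction n)
  case 0
  then show ?case using ss_zero[OF ss] ss_N0[OF ss] by simp
next
  case (Suc n)
  have e: "(\<lambda>s. \<Sum>j<Suc n. F j s) = (\<lambda>s. (\<Sum>j<n. F j s) + F n s)" by simp
  have IH: "(\<lambda>s. \<Sum>j<n. F j s) \<in> S \<and> N (\<lambda>s. \<Sum>j<n. F j s) \<le> (\<Sum>j<n. N (F j))"
    using Suc by simp
  have Fn: "F n \<in> S" using Suc by simp
  show ?case unfolding e
    using IH Fn ss_add[OF ss, of "\<lambda>s. \<Sum>j<n. F j s" "F n"] ss_tri[OF ss, of "\<lambda>s. \<Sum>j<n. F j s" "F n"]
    by simp
qed

lemma rot_main:
  fixes \<epsilon> t :: real and b :: "nat \<Rightarrow> real" and M :: nat
  assumes ss: "symmetric_space S N"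
    and e: "\<epsilon> > 0" and t: "0 < t" "t \<le> 1"
    and b0: "\<And>i. 0 \<le> b i" and bt: "\<And>i. b i \<le> t" and banti: "\<And>i. b (Suc i) \<le> b i"
    and gS: "(\<lambda>s. \<Sum>i<M. \<epsilon> * indicator {0<..<b i} s) \<in> S"
    and phi: "N (indicator {0<..<t}) > 0"
  shows "(\<Sum>i<M. \<epsilon> * b i) \<le> t * N (\<lambda>s. \<Sum>i<M. \<epsilon> * indicator {0<..<b i} s) / N (indicator {0<..<t})"
proof -
  define g where "g = (\<lambda>s. \<Sum>i<M. \<epsilon> * indicator {0<..<b i} s)"
  define \<phi> where "\<phi> = N (indicator {0<..<t})"
  define X where "X = (\<Sum>i<M. \<epsilon> * b i)"
  have Ng: "N g \<ge> 0" using ss_nonneg[OF ss gS] by (simp add: g_def)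
  have phi0: "\<phi> > 0" using phi by (simp add: \<phi>_def)
  have main: "X \<le> t * N g / \<phi> + 2 * real M * \<epsilon> * t / real n" if n: "0 < n" for n :: nat
  proof -
    define G where "G j = (\<lambda>s. \<Sum>i<M. \<epsilon> * indicator (rotset t (real j * t / real n) (b i)) s)" for j
    have cj: "0 \<le> real j * t / real n" "real j * t / real n < t" if "j < n" for j
      using that n t by (simp_all add: field_simps)
    have GS: "G j \<in> S \<and> N (G j) = N g" if j: "j < n" for j
    proof -
      have eq: "equimeasurable (G j) g"
        unfolding G_def g_def
      proof (rule step_equi[OF e])
        show "rotset t (real j * t / real n) (b (Suc i)) \<subseteq> rotset t (real j * t / real n) (b i)" for i
          by (rule rot_mono[OF banti])
        show "{0<..<b (Suc i)} \<subseteq> {0<..<b i}" for i using banti[of i] by auto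
        show "rotset t (real j * t / real n) (b i) \<in> sets mu01" for i
          by (rule mu01_sets[OF rot_borel rot_sub]) (use cj[OF j] t in auto)
        show "{0<..<b i} \<in> sets mu01" for i using bt[of i] t by (intro Ioo_sets) auto
        show "emeasure mu01 (rotset t (real j * t / real n) (b i)) = emeasure mu01 {0<..<b i}" for i
        proof -
          have "emeasure mu01 (rotset t (real j * t / real n) (b i)) = emeasure lborel (rotset t (real j * t / real n) (b i))"
            by (rule mu01_emeasure[OF rot_borel rot_sub]) (use cj[OF j] t in auto)
          also have "\<dots> = ennreal (b i)" by (rule rot_measure) (use cj[OF j] b0 bt in auto)
          also have "\<dots> = emeasure mu01 {0<..<b i}" using b0[of i] bt[of i] t by (simp add: Ioo_mu01)
          finally show ?thesis .
        qed
      qed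
      have meas: "G j \<in> borel_measurable mu01"
        unfolding G_def
        by (rule step_meas, rule mu01_sets[OF rot_borel rot_sub]) (use cj[OF j] t in auto)
      show ?thesis using ss_equi[OF ss _ meas eq] gS by (simp add: g_def)
    qed
    define h where "h = (\<lambda>s. \<Sum>j<n. G j s)"
    have hS: "h \<in> S" and Nh0: "N h \<le> (\<Sum>j<n. N (G j))"
      using ss_sum2[OF ss, of n G] GS unfolding h_def by auto
    have Nh: "N h \<le> real n * N g" using Nh0 GS by simp
    define L where "L = (\<Sum>i<M. \<epsilon> * (real n * b i / t - 2))"
    have hL: "L \<le> h s" if s: "0 < s" "s < t" for s
    proof -
      have "h s = (\<Sum>i<M. \<epsilon> * (\<Sum>j<n. indicator (rotset t (real j * t / real n) (b i)) s))"
        unfolding h_def G_def by (simp only: sum_distrib_left) (rule sum.swap)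
      moreover have "L \<le> (\<Sum>i<M. \<epsilon> * (\<Sum>j<n. indicator (rotset t (real j * t / real n) (b i)) s))"
        unfolding L_def
        by (rule sum_mono, rule mult_left_mono, rule rot_count) (use t n s b0 bt e in auto)
      ultimately show ?thesis by simp
    qed
    have h0: "0 \<le> h s" for s unfolding h_def G_def
      by (intro sum_nonneg step_nonneg) (use e in auto)
    have LP: "L * \<phi> \<le> real n * N g"
    proof (cases "L \<le> 0")
      case True
      then have "L * \<phi> \<le> 0" using phi0 by (simp add: mult_nonpos_nonneg)
      also have "0 \<le> real n * N g" using Ng by simp
      finally show ?thesis .
    next
      case False
      have Isets: "{0<..<t} \<in> sets mu01" using t by (intro Ioo_sets) auto
      have m: "(\<lambda>s. L * indicator {0<..<t} s) \<in> borel_measurable mu01"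
        using Isets by measurable
      have "AE s in mu01. \<bar>L * indicator {0<..<t} s\<bar> \<le> \<bar>h s\<bar>"
      proof (rule AE_I2)
        fix s show "\<bar>L * indicator {0<..<t} s\<bar> \<le> \<bar>h s\<bar>"
          using hL[of s] h0[of s] False by (auto simp: indicator_def)
      qed
      from ss_ideal[OF ss hS m this] have LS: "(\<lambda>s. L * indicator {0<..<t} s) \<in> S"
        and LN: "N (\<lambda>s. L * indicator {0<..<t} s) \<le> N h" by auto
      have "(\<lambda>s. (1/L) * (L * indicator {0<..<t} s)) = indicator {0<..<t}"
        using False by (auto simp: fun_eq_iff)
      then have IS: "indicator {0<..<t} \<in> S" using ss_smult[OF ss LS, of "1/L"] by simp
      have "N (\<lambda>s. L * indicator {0<..<t} s) = \<bar>L\<bar> * \<phi>"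
        unfolding \<phi>_def using ss_hom[OF ss IS, of L] by simp
      then show ?thesis using LN Nh False by simp
    qed
    have Leq: "L = X * real n / t - 2 * real M * \<epsilon>"
    proof -
      have "L = (\<Sum>i<M. \<epsilon> * b i * (real n / t) - 2 * \<epsilon>)"
        unfolding L_def by (rule sum.cong) (simp_all add: algebra_simps)
      also have "\<dots> = (\<Sum>i<M. \<epsilon> * b i) * (real n / t) - real M * (2 * \<epsilon>)"
        by (simp only: sum_subtractf sum_distrib_right[symmetric] sum_constant card_lessThan)
      finally show ?thesis unfolding X_def by simp
    qed
    have "X * real n / t * \<phi> \<le> real n * N g + 2 * real M * \<epsilon> * \<phi>"
      using LP unfolding Leq by (simp add: algebra_simps)
    then have "(X * real n / t * \<phi>) * (t / (real n * \<phi>)) \<le> (real n * N g + 2 * real M * \<epsilon> * \<phi>) * (t / (real n * \<phi>))"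
      by (rule mult_right_mono) (use t phi0 in simp)
    moreover have "(X * real n / t * \<phi>) * (t / (real n * \<phi>)) = X" using t phi0 n by (simp add: field_simps)
    moreover have "(real n * N g + 2 * real M * \<epsilon> * \<phi>) * (t / (real n * \<phi>)) = t * N g / \<phi> + 2 * real M * \<epsilon> * t / real n"
      using t phi0 n by (simp add: field_simps)
    ultimately show ?thesis by simp
  qed
  have "X \<le> t * N g / \<phi>"
  proof (rule ccontr)
    assume "\<not> X \<le> t * N g / \<phi>"
    then have D: "0 < X - t * N g / \<phi>" by simp
    obtain n :: nat where n: "2 * real M * \<epsilon> * t / (X - t * N g / \<phi>) < real n"
      using reals_Archimedean2 by blast
    have K0: "0 \<le> 2 * real M * \<epsilon> * t" using e t by simp
    have "0 \<le> 2 * real M * \<epsilon> * t / (X - t * N g / \<phi>)" using K0 D by simp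
    then have n0: "0 < n" using n by linarith
    have "2 * real M * \<epsilon> * t < real n * (X - t * N g / \<phi>)"
      using n D by (simp add: field_simps)
    then have "2 * real M * \<epsilon> * t / real n < X - t * N g / \<phi>"
      using n0 by (simp add: field_simps)
    then show False using main[OF n0] by linarith
  qed
  then show ?thesis unfolding X_def g_def \<phi>_def .
qed

lemma distr_fin: "distr_fun x \<tau> \<le> 1"
  unfolding distr_fun_def by (rule mu01_le1)

lemma distr_lt_top: "distr_fun x \<tau> < top"
  using order_le_less_trans[OF distr_fin[of x \<tau>], of top] by simp

lemma distr_fin': "distr_fun x \<tau> = ennreal (enn2real (distr_fun x \<tau>))"
  using distr_lt_top[of x \<tau>] by simp

lemma distr_le1: "enn2real (distr_fun x \<tau>) \<le> 1"
  using enn2real_mono[OF distr_fin[of x \<tau>]] by simp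

lemma A_sets:
  fixes x :: "real \<Rightarrow> real" and c :: real
  assumes "x \<in> borel_measurable mu01"
  shows "{s \<in> {0..1}. c < \<bar>x s\<bar>} \<in> sets mu01"
proof -
  have "(\<lambda>s. \<bar>x s\<bar>) \<in> borel_measurable mu01" using assms by (rule borel_measurable_abs)
  then have "{s \<in> space mu01. c < \<bar>x s\<bar>} \<in> sets mu01" unfolding borel_measurable_iff_greater by blast
  then show ?thesis by simp
qed

lemma distr_anti:
  assumes "x \<in> borel_measurable mu01" "\<tau> \<le> \<tau>'"
  shows "distr_fun x \<tau>' \<le> distr_fun x \<tau>"
  unfolding distr_fun_def
  by (rule emeasure_mono) (use assms A_sets in auto)

lemma x_step:
  fixes \<epsilon> t :: real and M :: nat
  assumes ss: "symmetric_space S N" and xS: "x \<in> S"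
    and e: "\<epsilon> > 0" and t: "0 < t" "t \<le> 1"
    and phi: "N (indicator {0<..<t}) > 0"
  shows "(\<Sum>i<M. \<epsilon> * min t (enn2real (distr_fun x (real (Suc i) * \<epsilon>)))) \<le> t * N x / N (indicator {0<..<t})"
proof -
  define a where "a i = enn2real (distr_fun x (real (Suc i) * \<epsilon>))" for i
  have xm: "x \<in> borel_measurable mu01" by (rule ss_meas[OF ss xS])
  have a0: "0 \<le> a i" for i unfolding a_def by simp
  have a1: "a i \<le> 1" for i unfolding a_def by (rule distr_le1)
  have aanti: "a (Suc i) \<le> a i" for i
    unfolding a_def
    by (rule enn2real_mono[OF distr_anti[OF xm]]) (use e distr_lt_top in \<open>auto simp: field_simps\<close>)
  define A where "A i = {s \<in> {0..1}. real (Suc i) * \<epsilon> < \<bar>x s\<bar>}" for i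
  have Asets: "A i \<in> sets mu01" for i unfolding A_def by (rule A_sets[OF xm])
  have Aanti: "A (Suc i) \<subseteq> A i" for i
    unfolding A_def using e by (auto simp: field_simps)
  define f where "f = (\<lambda>s. \<Sum>i<M. \<epsilon> * indicator (A i) s)"
  have fm: "f \<in> borel_measurable mu01" unfolding f_def by (rule step_meas[OF Asets])
  have f0: "0 \<le> f s" for s unfolding f_def by (rule step_nonneg) (use e in simp)
  have fx: "f s \<le> \<bar>x s\<bar>" for s
  proof (rule ccontr)
    assume "\<not> f s \<le> \<bar>x s\<bar>"
    then have "\<bar>x s\<bar> < f s" by simp
    then have L: "nat \<lfloor>\<bar>x s\<bar>/\<epsilon>\<rfloor> < M \<and> s \<in> A (nat \<lfloor>\<bar>x s\<bar>/\<epsilon>\<rfloor>)"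
      using level_sum[where U=A and \<tau>="\<bar>x s\<bar>", OF e _ Aanti] unfolding f_def by simp
    define m where "m = nat \<lfloor>\<bar>x s\<bar>/\<epsilon>\<rfloor>"
    have "real m = of_int \<lfloor>\<bar>x s\<bar>/\<epsilon>\<rfloor>" unfolding m_def using e by simp
    then have "\<bar>x s\<bar>/\<epsilon> < real (Suc m)" by linarith
    then have "\<bar>x s\<bar> < real (Suc m) * \<epsilon>" using e by (simp add: field_simps)
    moreover have "real (Suc m) * \<epsilon> < \<bar>x s\<bar>" using L unfolding m_def[symmetric] A_def by simp
    ultimately show False by simp
  qed
  have fS: "f \<in> S" and Nf: "N f \<le> N x"
    using ss_ideal[OF ss xS fm] f0 fx by (auto intro!: AE_I2)
  define g' where "g' = (\<lambda>s. \<Sum>i<M. \<epsilon> * indicator {0<..<a i} s)"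
  have Isets: "{0<..<a i} \<in> sets mu01" for i using a1 by (intro Ioo_sets) auto
  have eq: "equimeasurable g' f"
    unfolding g'_def f_def
  proof (rule step_equi[where U="\<lambda>i. {0<..<a i}" and V=A, OF e _ Aanti Isets Asets])
    show "{0<..<a (Suc i)} \<subseteq> {0<..<a i}" for i using aanti[of i] by auto
    show "emeasure mu01 {0<..<a i} = emeasure mu01 (A i)" for i
    proof -
      have "emeasure mu01 {0<..<a i} = ennreal (a i)" using a0 a1 by (simp add: Ioo_mu01)
      also have "\<dots> = distr_fun x (real (Suc i) * \<epsilon>)" unfolding a_def using distr_fin' by metis
      also have "\<dots> = emeasure mu01 (A i)" unfolding distr_fun_def A_def ..
      finally show ?thesis .
    qed
  qed
  have g'm: "g' \<in> borel_measurable mu01" unfolding g'_def by (rule step_meas[OF Isets])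
  have g'S: "g' \<in> S" and Ng': "N g' = N f" using ss_equi[OF ss fS g'm eq] by auto
  define g where "g = (\<lambda>s. \<Sum>i<M. \<epsilon> * indicator {0<..<min t (a i)} s)"
  have Isets2: "{0<..<min t (a i)} \<in> sets mu01" for i using a1[of i] by (intro Ioo_sets) (simp add: min_le_iff_disj)
  have gm: "g \<in> borel_measurable mu01" unfolding g_def by (rule step_meas[OF Isets2])
  have gg': "\<bar>g s\<bar> \<le> \<bar>g' s\<bar>" for s
  proof -
    have "g s \<le> g' s" unfolding g_def g'_def
      by (rule sum_mono) (use e in \<open>auto simp: indicator_def\<close>)
    moreover have "0 \<le> g s" unfolding g_def by (rule step_nonneg) (use e in simp)
    ultimately show ?thesis by simp
  qed
  have gS: "g \<in> S" and Ng: "N g \<le> N g'"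
    using ss_ideal[OF ss g'S gm] gg' by (auto intro!: AE_I2)
  have "(\<Sum>i<M. \<epsilon> * min t (a i)) \<le> t * N g / N (indicator {0<..<t})"
    unfolding g_def
  proof (rule rot_main[OF ss e t])
    show "0 \<le> min t (a i)" for i using a0[of i] t by simp
    show "min t (a i) \<le> t" for i by simp
    show "min t (a (Suc i)) \<le> min t (a i)" for i using aanti[of i] by (rule min.mono[OF order_refl])
    show "(\<lambda>s. \<Sum>i<M. \<epsilon> * indicator {0<..<min t (a i)} s) \<in> S" using gS unfolding g_def .
    show "0 < N (indicator {0<..<t})" by (rule phi)
  qed
  also have "\<dots> \<le> t * N x / N (indicator {0<..<t})"
    using Ng Ng' Nf t phi by (intro divide_right_mono mult_left_mono) auto
  finally show ?thesis unfolding a_def .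
qed

lemma rearr_bound:
  fixes x :: "real \<Rightarrow> real" and \<epsilon> s :: real
  assumes e: "0 < \<epsilon>"
  shows "ennreal (rearr x s) \<le> ennreal \<epsilon> +
    (\<Sum>i. ennreal \<epsilon> * indicator {..enn2real (distr_fun x (real (Suc i) * \<epsilon>))} s)"
proof (cases "rearr x s \<le> 0")
  case True
  then show ?thesis by (simp add: ennreal_neg)
next
  case False
  define R where "R = rearr x s"
  have R0: "0 < R" using False by (simp add: R_def)
  define c where "c = \<lceil>R/\<epsilon>\<rceil>"
  have c1: "1 \<le> c" unfolding c_def using R0 e by (simp add: le_ceiling_iff)
  define K where "K = nat c - 1"
  have Kc: "real K = of_int c - 1" unfolding K_def using c1 by (simp add: of_nat_diff)
  have cR: "of_int c < R/\<epsilon> + 1" "R/\<epsilon> \<le> of_int c" unfolding c_def by linarith+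
  have mem: "s \<le> enn2real (distr_fun x (real (Suc i) * \<epsilon>))" if i: "i < K" for i
  proof (rule ccontr)
    assume ns: "\<not> s \<le> enn2real (distr_fun x (real (Suc i) * \<epsilon>))"
    have "real (Suc i) \<le> real K" using i by simp
    then have "real (Suc i) < R/\<epsilon>" using Kc cR by linarith
    then have lt: "real (Suc i) * \<epsilon> < R" using e by (simp add: field_simps)
    have "distr_fun x (real (Suc i) * \<epsilon>) = ennreal (enn2real (distr_fun x (real (Suc i) * \<epsilon>)))"
      by (rule distr_fin')
    also have "\<dots> < ennreal s" using ns by (simp add: ennreal_less_iff)
    finally have "real (Suc i) * \<epsilon> \<in> {\<tau>. \<tau> \<ge> 0 \<and> distr_fun x \<tau> < ennreal s}" using e by simp
    then have "R \<le> real (Suc i) * \<epsilon>" unfolding R_def rearr_def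
      by (rule cInf_lower) (rule bdd_belowI[of _ 0], auto)
    then show False using lt by simp
  qed
  have "ennreal R \<le> ennreal (\<epsilon> + real K * \<epsilon>)"
  proof -
    have "R \<le> \<epsilon> + real K * \<epsilon>"
    proof -
      have "R/\<epsilon> \<le> 1 + real K" using Kc cR by linarith
      then show ?thesis using e by (simp add: field_simps)
    qed
    then show ?thesis by (rule ennreal_leI)
  qed
  also have "\<dots> = ennreal \<epsilon> + (\<Sum>i<K. ennreal \<epsilon> * indicator {..enn2real (distr_fun x (real (Suc i) * \<epsilon>))} s)"
  proof -
    have "(\<Sum>i<K. ennreal \<epsilon> * indicator {..enn2real (distr_fun x (real (Suc i) * \<epsilon>))} s) = (\<Sum>i<K. ennreal \<epsilon>)"
      by (rule sum.cong) (use mem in auto)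
    also have "\<dots> = ennreal (real K * \<epsilon>)"
      using e by (simp add: ennreal_mult ennreal_of_nat_eq_real_of_nat)
    finally show ?thesis using e by (simp add: ennreal_plus)
  qed
  also have "\<dots> \<le> ennreal \<epsilon> + (\<Sum>i. ennreal \<epsilon> * indicator {..enn2real (distr_fun x (real (Suc i) * \<epsilon>))} s)"
    by (intro add_left_mono sum_le_suminf) auto
  finally show ?thesis unfolding R_def .
qed

lemma rearr_int:
  fixes x :: "real \<Rightarrow> real" and \<epsilon> t :: real
  assumes e: "0 < \<epsilon>" and t: "0 < t"
  shows "(\<integral>\<^sup>+ s\<in>{0<..<t}. ennreal (rearr x s) \<partial>lborel) \<le> ennreal (\<epsilon> * t) +
     (\<Sum>i. ennreal \<epsilon> * ennreal (min t (enn2real (distr_fun x (real (Suc i) * \<epsilon>)))))"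
proof -
  define a where "a i = enn2real (distr_fun x (real (Suc i) * \<epsilon>))" for i
  have a0: "0 \<le> a i" for i unfolding a_def by simp
  have "(\<integral>\<^sup>+ s\<in>{0<..<t}. ennreal (rearr x s) \<partial>lborel) \<le>
     (\<integral>\<^sup>+ s. ennreal \<epsilon> * indicator {0<..<t} s + (\<Sum>i. ennreal \<epsilon> * indicator ({..a i} \<inter> {0<..<t}) s) \<partial>lborel)"
  proof (rule nn_integral_mono)
    fix s
    show "ennreal (rearr x s) * indicator {0<..<t} s \<le>
      ennreal \<epsilon> * indicator {0<..<t} s + (\<Sum>i. ennreal \<epsilon> * indicator ({..a i} \<inter> {0<..<t}) s)"
    proof (cases "s \<in> {0<..<t}")
      case True
      have "indicator ({..a i} \<inter> {0<..<t}) s = (indicator {..a i} s :: ennreal)" for i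
        using True by (simp add: indicator_def)
      then show ?thesis using rearr_bound[OF e, of x s] True by (simp add: a_def)
    qed simp
  qed
  also have "\<dots> = ennreal \<epsilon> * emeasure lborel {0<..<t} + (\<Sum>i. ennreal \<epsilon> * emeasure lborel ({..a i} \<inter> {0<..<t}))"
  proof -
    have s1: "(\<integral>\<^sup>+ s. ennreal \<epsilon> * indicator {0<..<t} s + (\<Sum>i. ennreal \<epsilon> * indicator ({..a i} \<inter> {0<..<t}) s) \<partial>lborel)
      = (\<integral>\<^sup>+ s. ennreal \<epsilon> * indicator {0<..<t} s \<partial>lborel) + (\<integral>\<^sup>+ s. (\<Sum>i. ennreal \<epsilon> * indicator ({..a i} \<inter> {0<..<t}) s) \<partial>lborel)"
      by (rule nn_integral_add) auto
    have s2: "(\<integral>\<^sup>+ s. (\<Sum>i. ennreal \<epsilon> * indicator ({..a i} \<inter> {0<..<t}) s) \<partial>lborel)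
       = (\<Sum>i. (\<integral>\<^sup>+ s. ennreal \<epsilon> * indicator ({..a i} \<inter> {0<..<t}) s \<partial>lborel))"
      by (rule nn_integral_suminf) auto
    have s3: "(\<integral>\<^sup>+ s. ennreal \<epsilon> * indicator ({..a i} \<inter> {0<..<t}) s \<partial>lborel) = ennreal \<epsilon> * emeasure lborel ({..a i} \<inter> {0<..<t})" for i
      by (rule nn_integral_cmult_indicator) auto
    have s4: "(\<integral>\<^sup>+ s. ennreal \<epsilon> * indicator {0<..<t} s \<partial>lborel) = ennreal \<epsilon> * emeasure lborel {0<..<t}"
      by (rule nn_integral_cmult_indicator) auto
    show ?thesis unfolding s1 s2 s3 s4 ..
  qed
  also have "\<dots> \<le> ennreal (\<epsilon> * t) + (\<Sum>i. ennreal \<epsilon> * ennreal (min t (a i)))"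
  proof (rule add_mono)
    show "ennreal \<epsilon> * emeasure lborel {0<..<t} \<le> ennreal (\<epsilon> * t)"
      using e t by (simp add: ennreal_mult)
    show "(\<Sum>i. ennreal \<epsilon> * emeasure lborel ({..a i} \<inter> {0<..<t})) \<le> (\<Sum>i. ennreal \<epsilon> * ennreal (min t (a i)))"
    proof (rule suminf_le)
      fix i
      have "emeasure lborel ({..a i} \<inter> {0<..<t}) \<le> emeasure lborel {0..min t (a i)}"
        by (rule emeasure_mono) auto
      also have "\<dots> = ennreal (min t (a i))" using a0[of i] t by simp
      finally show "ennreal \<epsilon> * emeasure lborel ({..a i} \<inter> {0<..<t}) \<le> ennreal \<epsilon> * ennreal (min t (a i))"
        by (rule mult_left_mono) simp
    qed auto
  qed
  finally show ?thesis unfolding a_def .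
qed

lemma main_bound:
  fixes x :: "real \<Rightarrow> real" and t t' :: real
  assumes ss: "symmetric_space S N" and xS: "x \<in> S"
    and t: "0 < t" "t \<le> 1" and t': "0 < t'" "t' \<le> t"
    and phi: "N (indicator {0<..<t'}) > 0"
    and cond: "t' < t \<Longrightarrow> distr_fun x 0 \<le> ennreal t'"
  shows "(\<integral>\<^sup>+ s\<in>{0<..<t}. ennreal (rearr x s) \<partial>lborel) \<le> ennreal (t' * N x / N (indicator {0<..<t'}))"
proof -
  define B where "B = t' * N x / N (indicator {0<..<t'})"
  have B0: "0 \<le> B" unfolding B_def using ss_nonneg[OF ss xS] t' phi by simp
  show ?thesis unfolding B_def[symmetric]
  proof (rule ennreal_le_epsilon)
    fix e :: real assume e: "0 < e"
    define \<epsilon> where "\<epsilon> = e / t"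
    have e0: "\<epsilon> > 0" unfolding \<epsilon>_def using e t by simp
    define a where "a i = enn2real (distr_fun x (real (Suc i) * \<epsilon>))" for i
    have a0: "0 \<le> a i" for i unfolding a_def by simp
    have amin: "min t (a i) = min t' (a i)" for i
    proof (cases "t' < t")
      case True
      have "distr_fun x (real (Suc i) * \<epsilon>) \<le> distr_fun x 0"
        by (rule distr_anti[OF ss_meas[OF ss xS]]) (use e0 in simp)
      also have "\<dots> \<le> ennreal t'" by (rule cond[OF True])
      finally have "a i \<le> enn2real (ennreal t')" unfolding a_def by (rule enn2real_mono) simp
      then have "a i \<le> t'" using t' by simp
      then show ?thesis using True by (simp add: min_def)
    next
      case False
      then show ?thesis using t' by simp
    qed
    have "(\<integral>\<^sup>+ s\<in>{0<..<t}. ennreal (rearr x s) \<partial>lborel) \<le> ennreal (\<epsilon> * t) + (\<Sum>i. ennreal \<epsilon> * ennreal (min t (a i)))"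
      using rearr_int[OF e0 t(1), of x] unfolding a_def .
    also have "(\<Sum>i. ennreal \<epsilon> * ennreal (min t (a i))) \<le> ennreal B"
    proof (rule suminf_le_const)
      show "summable (\<lambda>i. ennreal \<epsilon> * ennreal (min t (a i)))" by simp
      fix M
      have "(\<Sum>i<M. ennreal \<epsilon> * ennreal (min t (a i))) = (\<Sum>i<M. ennreal (\<epsilon> * min t' (a i)))"
        by (rule sum.cong) (use e0 in \<open>simp_all add: amin ennreal_mult'\<close>)
      also have "\<dots> = ennreal (\<Sum>i<M. \<epsilon> * min t' (a i))"
        by (rule sum_ennreal) (use e0 a0 t' in simp)
      also have "\<dots> \<le> ennreal B"
        unfolding B_def a_def using t' t
        by (intro ennreal_leI x_step[OF ss xS e0 t'(1) _ phi]) simp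
      finally show "(\<Sum>i<M. ennreal \<epsilon> * ennreal (min t (a i))) \<le> ennreal B" .
    qed
    finally have "(\<integral>\<^sup>+ s\<in>{0<..<t}. ennreal (rearr x s) \<partial>lborel) \<le> ennreal (\<epsilon> * t) + ennreal B"
      by (simp add: add_left_mono)
    moreover have "\<epsilon> * t = e" unfolding \<epsilon>_def using t by simp
    ultimately show "(\<integral>\<^sup>+ s\<in>{0<..<t}. ennreal (rearr x s) \<partial>lborel) \<le> ennreal B + ennreal e"
      by (simp add: add.commute)
  qed
qed

lemma small_ratio:
  fixes \<phi> \<psi> :: "real \<Rightarrow> real"
  assumes lim: "((\<lambda>t. \<psi> t / \<phi> t) \<longlongrightarrow> 0) (at_right 0)" and eta: "0 < \<eta>"
  obtains d where "0 < d" "\<And>s. 0 < s \<Longrightarrow> s < d \<Longrightarrow> \<psi> s / \<phi> s < \<eta>"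
proof -
  have "eventually (\<lambda>s. \<psi> s / \<phi> s < \<eta>) (at_right 0)"
    using order_tendstoD(2)[OF lim eta] .
  then have "\<exists>b>0. \<forall>y>0. y < b \<longrightarrow> \<psi> y / \<phi> y < \<eta>"
    using eventually_at_right[of "0::real" 1] by simp
  then obtain b where "b > 0" "\<And>y. y > 0 \<Longrightarrow> y < b \<Longrightarrow> \<psi> y / \<phi> y < \<eta>"
    by auto
  then show ?thesis using that by blast
qed

lemma ratio_bound:
  fixes \<phi> \<psi> :: "real \<Rightarrow> real"
  assumes G1: "classG \<phi>" and G2: "classG \<psi>"
    and lim: "((\<lambda>t. \<psi> t / \<phi> t) \<longlongrightarrow> 0) (at_right 0)"
  obtains K where "1 \<le> K" "\<And>t. t \<in> {0<..1} \<Longrightarrow> \<psi> t / \<phi> t \<le> K"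
proof -
  obtain d where d: "0 < d" "\<And>s. 0 < s \<Longrightarrow> s < d \<Longrightarrow> \<psi> s / \<phi> s < 1"
    using small_ratio[OF lim, of 1] by auto
  define d1 where "d1 = min d 1"
  have d1: "0 < d1" "d1 \<le> 1" using d by (auto simp: d1_def)
  define K where "K = max 1 (\<psi> 1 / \<phi> d1)"
  have "\<psi> t / \<phi> t \<le> K" if t: "t \<in> {0<..1}" for t
  proof (cases "t < d")
    case True then show ?thesis using d t by (simp add: K_def) (smt (verit) d(2))
  next
    case False
    then have "d1 \<le> t" using t by (auto simp: d1_def)
    have pos: "\<phi> d1 > 0" "\<phi> t > 0" "\<psi> t > 0" using G1 G2 d1 t unfolding classG_def by auto
    have m1: "\<phi> d1 \<le> \<phi> t" using G1 d1 t \<open>d1 \<le> t\<close> unfolding classG_def by (auto intro: mono_onD)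
    have m2: "\<psi> t \<le> \<psi> 1" using G2 t unfolding classG_def by (auto intro: mono_onD)
    have "\<psi> t / \<phi> t \<le> \<psi> 1 / \<phi> t" using m2 pos by (simp add: divide_right_mono)
    also have "\<dots> \<le> \<psi> 1 / \<phi> d1" using m1 pos m2 by (intro divide_left_mono) auto
    finally show ?thesis by (simp add: K_def)
  qed
  then show ?thesis using that[of K] by (simp add: K_def)
qed

lemma concave_ratio:
  fixes \<psi> :: "real \<Rightarrow> real"
  assumes G: "classG \<psi>" and d: "0 < \<delta>" "\<delta> < t" "t \<le> 1"
  shows "\<psi> t / t \<le> 2 * \<psi> \<delta> / \<delta>"
proof -
  have cc: "concave_on {0<..1} \<psi>" and pos: "\<And>s. s \<in> {0<..1} \<Longrightarrow> \<psi> s > 0"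
    using G unfolding classG_def by auto
  define l where "l = (\<delta>/2) / (t - \<delta>/2)"
  have l0: "0 \<le> l" "l \<le> 1" using d by (auto simp: l_def field_simps)
  have ne: "t - \<delta>/2 \<noteq> 0" "2*t - \<delta> \<noteq> 0" using d by auto
  have lt: "l * (t - \<delta>/2) = \<delta>/2" unfolding l_def using ne by (simp add: field_simps)
  have pt: "(1 - l) * (\<delta>/2) + l * t = \<delta>"
  proof -
    have "(1 - l) * (\<delta>/2) + l * t = \<delta>/2 + l * (t - \<delta>/2)" by (simp add: field_simps)
    also have "\<dots> = \<delta>/2 + \<delta>/2" by (simp only: lt)
    finally show ?thesis by simp
  qed
  have "(1 - l) * \<psi> (\<delta>/2) + l * \<psi> t \<le> \<psi> ((1 - l) *\<^sub>R (\<delta>/2) + l *\<^sub>R t)"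
    by (rule concave_onD[OF cc l0]) (use d in auto)
  then have "(1 - l) * \<psi> (\<delta>/2) + l * \<psi> t \<le> \<psi> \<delta>" using pt by simp
  moreover have "0 \<le> (1 - l) * \<psi> (\<delta>/2)" using l0 pos[of "\<delta>/2"] d by simp
  ultimately have A: "l * \<psi> t \<le> \<psi> \<delta>" by linarith
  have "\<delta> / (2 * t) \<le> l" using d unfolding l_def by (simp add: field_simps)
  then have "\<delta> / (2 * t) * \<psi> t \<le> l * \<psi> t" using pos[of t] d by (intro mult_right_mono) auto
  with A have "\<delta> / (2 * t) * \<psi> t \<le> \<psi> \<delta>" by linarith
  then show ?thesis using d by (simp add: field_simps)
qed

lemma supp_sets:
  fixes x :: "real \<Rightarrow> real"
  assumes "x \<in> borel_measurable mu01"
  shows "{s \<in> {0..1}. 0 < \<bar>x s\<bar>} \<in> sets mu01"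
  by (rule A_sets[OF assms])

lemma small_support:
  fixes u :: "nat \<Rightarrow> real \<Rightarrow> real"
  assumes um: "\<And>n. u n \<in> borel_measurable mu01" and dis: "pairwise_disjoint_seq u" and d0: "0 < d0"
  obtains n where "distr_fun (u n) 0 < ennreal d0"
proof (rule ccontr)
  assume "\<not> thesis"
  then have big: "ennreal d0 \<le> distr_fun (u n) 0" for n using that by (meson not_le)
  define B where "B n = {s \<in> {0..1}. 0 < \<bar>u n s\<bar>}" for n
  have Bs: "B n \<in> sets mu01" for n unfolding B_def by (rule supp_sets[OF um])
  have "AE s in mu01. \<forall>m. \<forall>n. m \<noteq> n \<longrightarrow> u m s * u n s = 0"
    using dis unfolding pairwise_disjoint_seq_def by (simp add: AE_all_countable)
  then obtain Z where Z: "{s \<in> space mu01. \<not> (\<forall>m. \<forall>n. m \<noteq> n \<longrightarrow> u m s * u n s = 0)} \<subseteq> Z"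
    "emeasure mu01 Z = 0" "Z \<in> sets mu01"
    by (rule AE_E)
  have Zn: "Z \<in> null_sets mu01" using Z by auto
  define D where "D n = B n - Z" for n
  have Ds: "D n \<in> sets mu01" for n unfolding D_def using Bs Z by auto
  have eD: "emeasure mu01 (D n) = distr_fun (u n) 0" for n
    unfolding D_def using emeasure_Diff_null_set[OF Zn Bs] by (simp add: B_def distr_fun_def)
  have disj: "disjoint_family D"
    unfolding disjoint_family_on_def
  proof (intro ballI impI)
    fix m n :: nat assume "m \<in> UNIV" "n \<in> UNIV" and mn: "m \<noteq> n"
    show "D m \<inter> D n = {}"
    proof (rule ccontr)
      assume "D m \<inter> D n \<noteq> {}"
      then obtain s where s: "s \<in> D m" "s \<in> D n" by auto
      then have "s \<in> {0..1}" "s \<notin> Z" "u m s \<noteq> 0" "u n s \<noteq> 0" unfolding D_def B_def by auto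
      then have "\<forall>m. \<forall>n. m \<noteq> n \<longrightarrow> u m s * u n s = 0" using Z(1) by auto
      then show False using mn \<open>u m s \<noteq> 0\<close> \<open>u n s \<noteq> 0\<close> by auto
    qed
  qed
  have sumD: "(\<Sum>n. emeasure mu01 (D n)) \<le> 1"
  proof -
    have "(\<Sum>n. emeasure mu01 (D n)) = emeasure mu01 (\<Union> (range D))"
      by (rule suminf_emeasure) (use Ds disj in auto)
    then show ?thesis using mu01_le1 by simp
  qed
  obtain K :: nat where K: "1 / d0 < real K" using reals_Archimedean2 by blast
  have "ennreal (real K * d0) = (\<Sum>n<K. ennreal d0)"
    using d0 by (simp add: ennreal_mult ennreal_of_nat_eq_real_of_nat)
  also have "\<dots> \<le> (\<Sum>n<K. emeasure mu01 (D n))"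
    by (rule sum_mono) (simp add: eD big)
  also have "\<dots> \<le> (\<Sum>n. emeasure mu01 (D n))"
    by (rule sum_le_suminf) auto
  also have "\<dots> \<le> 1" by (rule sumD)
  finally have "real K * d0 \<le> 1" by (simp add: ennreal_le_1)
  moreover have "1 < real K * d0" using K d0 by (simp add: field_simps)
  ultimately show False by simp
qed

theorem theorem2:
  fixes \<phi> \<psi> :: "real \<Rightarrow> real"
    and S :: "(real \<Rightarrow> real) set" and N :: "(real \<Rightarrow> real) \<Rightarrow> real"
  assumes "classG \<phi>" and "classG \<psi>"
    and "((\<lambda>t. \<psi> t / \<phi> t) \<longlongrightarrow> 0) (at_right 0)"
    and "symmetric_space S N"
    and "\<forall>t\<in>{0<..1}. fundamental_function N t = \<phi> t"
  shows "S \<subseteq> marc_space (tilde \<psi>)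
    \<and> (\<exists>C. \<forall>x\<in>S. marc_norm (tilde \<psi>) x \<le> C * N x)
    \<and> inclusion_DSS S N (tilde \<psi>)"
proof -
  note G1 = assms(1) and G2 = assms(2) and lim = assms(3) and ss = assms(4) and fund = assms(5)
  have phipos: "\<phi> t > 0" if "t \<in> {0<..1}" for t using G1 that unfolding classG_def by auto
  have psipos: "\<psi> t > 0" if "t \<in> {0<..1}" for t using G2 that unfolding classG_def by auto
  have Nind: "N (indicator {0<..<t}) = \<phi> t" if "t \<in> {0<..1}" for t
    using fund that unfolding fundamental_function_def by auto
  obtain K where K: "1 \<le> K" "\<And>t. t \<in> {0<..1} \<Longrightarrow> \<psi> t / \<phi> t \<le> K"
    using ratio_bound[OF G1 G2 lim] by blast
  have tl: "1 / tilde \<psi> t = \<psi> t / t" for t by (simp add: tilde_def)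
  have bound1: "marc_enorm (tilde \<psi>) x \<le> ennreal (K * N x)" if xS: "x \<in> S" for x
    unfolding marc_enorm_def
  proof (rule SUP_least)
    fix t :: real assume t: "t \<in> {0<..1}"
    have Nx: "0 \<le> N x" by (rule ss_nonneg[OF ss xS])
    have I: "(\<integral>\<^sup>+ s\<in>{0<..<t}. ennreal (rearr x s) \<partial>lborel) \<le> ennreal (t * N x / \<phi> t)"
      using main_bound[OF ss xS, of t t] t Nind[OF t] phipos[OF t] by auto
    have "ennreal (1 / tilde \<psi> t) * (\<integral>\<^sup>+ s\<in>{0<..<t}. ennreal (rearr x s) \<partial>lborel)
        \<le> ennreal (\<psi> t / t) * ennreal (t * N x / \<phi> t)"
      unfolding tl using I by (rule mult_left_mono) simp
    also have "\<dots> = ennreal (\<psi> t / t * (t * N x / \<phi> t))"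
      by (rule ennreal_mult''[symmetric]) (use t Nx phipos[OF t] in simp)
    also have "\<psi> t / t * (t * N x / \<phi> t) = (\<psi> t / \<phi> t) * N x" using t phipos[OF t] by (simp add: field_simps)
    also have "ennreal ((\<psi> t / \<phi> t) * N x) \<le> ennreal (K * N x)"
      by (rule ennreal_leI, rule mult_right_mono[OF K(2)[OF t] Nx])
    finally show "ennreal (1 / tilde \<psi> t) * (\<integral>\<^sup>+ s\<in>{0<..<t}. ennreal (rearr x s) \<partial>lborel) \<le> ennreal (K * N x)" .
  qed
  have part1: "S \<subseteq> marc_space (tilde \<psi>)"
  proof
    fix x assume xS: "x \<in> S"
    have "marc_enorm (tilde \<psi>) x < \<infinity>"
      using order_le_less_trans[OF bound1[OF xS]] by simp
    then show "x \<in> marc_space (tilde \<psi>)" unfolding marc_space_def using ss_meas[OF ss xS] by simp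
  qed
  have part2: "\<exists>C. \<forall>x\<in>S. marc_norm (tilde \<psi>) x \<le> C * N x"
  proof (intro exI ballI)
    fix x assume xS: "x \<in> S"
    have "enn2real (marc_enorm (tilde \<psi>) x) \<le> enn2real (ennreal (K * N x))"
      by (rule enn2real_mono[OF bound1[OF xS]]) simp
    then show "marc_norm (tilde \<psi>) x \<le> K * N x"
      unfolding marc_norm_def using K(1) ss_nonneg[OF ss xS] by simp
  qed
  have part3: "inclusion_DSS S N (tilde \<psi>)"
    unfolding inclusion_DSS_def
  proof
    assume "\<exists>u c. (\<forall>n. u n \<in> S \<and> \<not> (AE t in mu01. u n t = 0)) \<and> pairwise_disjoint_seq u \<and>
          c > 0 \<and> (\<forall>x\<in>closed_span S N u. c * N x \<le> marc_norm (tilde \<psi>) x)"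
    then obtain u c where uS: "\<And>n. u n \<in> S" and unz: "\<And>n. \<not> (AE t in mu01. u n t = 0)"
      and dis: "pairwise_disjoint_seq u" and c: "c > 0"
      and iso: "\<forall>x\<in>closed_span S N u. c * N x \<le> marc_norm (tilde \<psi>) x" by metis
    obtain d0 where d0: "0 < d0" "\<And>s. 0 < s \<Longrightarrow> s < d0 \<Longrightarrow> \<psi> s / \<phi> s < c/4"
      using small_ratio[OF lim, of "c/4"] c by auto
    obtain n where n: "distr_fun (u n) 0 < ennreal d0"
      using small_support[OF ss_meas[OF ss uS] dis d0(1)] by blast
    define x where "x = u n"
    have xS: "x \<in> S" unfolding x_def by (rule uS)
    have xm: "x \<in> borel_measurable mu01" by (rule ss_meas[OF ss xS])
    define \<delta> where "\<delta> = enn2real (distr_fun x 0)"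
    have dx: "distr_fun x 0 = ennreal \<delta>" unfolding \<delta>_def by (rule distr_fin')
    have \<delta>pos: "0 < \<delta>"
    proof (rule ccontr)
      assume "\<not> 0 < \<delta>"
      then have "\<delta> = 0" using enn2real_nonneg[of "distr_fun x 0"] unfolding \<delta>_def[symmetric] by linarith
      then have "emeasure mu01 {s \<in> {0..1}. 0 < \<bar>x s\<bar>} = 0" using dx unfolding distr_fun_def by simp
      moreover have sp: "{s \<in> space mu01. \<not> x s = 0} = {s \<in> {0..1}. 0 < \<bar>x s\<bar>}"
        by (simp add: zero_less_abs_iff)
      ultimately have "AE s in mu01. x s = 0"
        using AE_iff_measurable[OF supp_sets[OF xm] sp] by simp
      then show False using unz[of n] unfolding x_def by simp
    qed
    have \<delta>d: "\<delta> < d0" using n dx unfolding x_def[symmetric] using \<delta>pos by (simp add: ennreal_less_iff)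
    have \<delta>1: "\<delta> \<le> 1" unfolding \<delta>_def by (rule distr_le1)
    have Nx: "0 < N x"
    proof -
      have "N x \<noteq> 0" using ss_null[OF ss xS] unz[of n] unfolding x_def by simp
      then show ?thesis using ss_nonneg[OF ss xS] by simp
    qed
    have span: "x \<in> closed_span S N u"
      unfolding closed_span_def
    proof (rule CollectI, rule conjI[OF xS], rule exI[of _ "\<lambda>k. x"], rule conjI)
      show "\<forall>k. \<exists>m c. x = (\<lambda>t. \<Sum>i<m. c i * u i t)"
      proof
        fix k :: nat
        have eq: "x = (\<lambda>t. \<Sum>i<Suc n. (if i = n then 1 else 0) * u i t)"
          unfolding x_def by (simp add: if_distrib sum.delta' cong: if_cong)
        show "\<exists>m c. x = (\<lambda>t. \<Sum>i<m. c i * u i t)"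
          by (rule exI[of _ "Suc n"], rule exI[of _ "\<lambda>i. if i = n then 1 else 0"]) (rule eq)
      qed
      show "(\<lambda>k. N (\<lambda>t. x t - x t)) \<longlonglongrightarrow> 0" using ss_N0[OF ss] by simp
    qed
    have bnd: "marc_enorm (tilde \<psi>) x \<le> ennreal (c/2 * N x)"
      unfolding marc_enorm_def
    proof (rule SUP_least)
      fix t :: real assume t: "t \<in> {0<..1}"
      define t' where "t' = min t \<delta>"
      have t': "0 < t'" "t' \<le> t" "t' \<le> 1" "t' \<in> {0<..1}" using t \<delta>pos \<delta>1 by (auto simp: t'_def)
      have cond: "distr_fun x 0 \<le> ennreal t'" if "t' < t"
        using that dx by (simp add: t'_def min_def split: if_splits)
      have I: "(\<integral>\<^sup>+ s\<in>{0<..<t}. ennreal (rearr x s) \<partial>lborel) \<le> ennreal (t' * N x / \<phi> t')"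
        using main_bound[OF ss xS, of t t'] t t' Nind[OF t'(4)] phipos[OF t'(4)] cond by auto
      have R: "\<psi> t / t * (t' / \<phi> t') \<le> c/2"
      proof (cases "t \<le> \<delta>")
        case True
        then have "t' = t" by (simp add: t'_def)
        moreover have "\<psi> t / \<phi> t < c/4" using d0(2)[of t] t True \<delta>d by auto
        ultimately have "\<psi> t / t * (t' / \<phi> t') = \<psi> t / \<phi> t" "\<psi> t / \<phi> t < c/4" using t by auto
        then show ?thesis using c by linarith
      next
        case False
        then have tt: "t' = \<delta>" by (simp add: t'_def)
        have cr: "\<psi> t / t \<le> 2 * \<psi> \<delta> / \<delta>" using concave_ratio[OF G2 \<delta>pos] False t by auto
        have "\<psi> t / t * (\<delta> / \<phi> \<delta>) \<le> 2 * \<psi> \<delta> / \<delta> * (\<delta> / \<phi> \<delta>)"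
          by (rule mult_right_mono[OF cr]) (use \<delta>pos phipos[OF t'(4)] tt in simp)
        also have "\<dots> = 2 * (\<psi> \<delta> / \<phi> \<delta>)" using \<delta>pos by simp
        also have "\<psi> \<delta> / \<phi> \<delta> < c/4" using d0(2)[OF \<delta>pos \<delta>d] .
        finally show ?thesis using tt by simp
      qed
      have Nx0: "0 \<le> N x" using Nx by simp
      have "ennreal (1 / tilde \<psi> t) * (\<integral>\<^sup>+ s\<in>{0<..<t}. ennreal (rearr x s) \<partial>lborel)
          \<le> ennreal (\<psi> t / t) * ennreal (t' * N x / \<phi> t')"
        unfolding tl using I by (rule mult_left_mono) simp
      also have "\<dots> = ennreal (\<psi> t / t * (t' * N x / \<phi> t'))"
        by (rule ennreal_mult''[symmetric]) (use t' Nx0 phipos[OF t'(4)] in simp)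
      also have "\<psi> t / t * (t' * N x / \<phi> t') = (\<psi> t / t * (t' / \<phi> t')) * N x" by simp
      also have "ennreal ((\<psi> t / t * (t' / \<phi> t')) * N x) \<le> ennreal (c/2 * N x)"
        by (rule ennreal_leI, rule mult_right_mono[OF R Nx0])
      finally show "ennreal (1 / tilde \<psi> t) * (\<integral>\<^sup>+ s\<in>{0<..<t}. ennreal (rearr x s) \<partial>lborel) \<le> ennreal (c/2 * N x)" .
    qed
    have "marc_norm (tilde \<psi>) x \<le> c/2 * N x"
    proof -
      have "enn2real (marc_enorm (tilde \<psi>) x) \<le> enn2real (ennreal (c/2 * N x))"
        by (rule enn2real_mono[OF bnd]) simp
      then show ?thesis unfolding marc_norm_def using c Nx by simp
    qed
    moreover have "c * N x \<le> marc_norm (tilde \<psi>) x" using iso span by blast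
    ultimately have "c * N x \<le> c/2 * N x" by linarith
    moreover have "c/2 * N x < c * N x" using c Nx by simp
    ultimately show False by linarith
  qed
  show ?thesis using part1 part2 part3 by blast
qed

end
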